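(* Let $k>t+1$, $n>2k-t$, and let $\mathcal{S}_p$ be a maximal set of $k$-spaces in $\mathrm{PG}(n,q)$ pairwise intersecting in at least a $t$-space. Let $\psi(\mathcal{S}_p)=\min\{\dim T: T\text{ a subspace of }\mathrm{PG}(n,q),\ \dim(T\cap\alpha)\geq t\ \forall\alpha\in\mathcal{S}_p\}$ and let $\mathcal{T}$ be the set of all $\psi(\mathcal{S}_p)$-dimensional subspaces meeting every element of $\mathcal{S}_p$ in at least a $t$-space. Then: (1) $t\leq\psi(\mathcal{S}_p)\leq k$, and if $\psi(\mathcal{S}_p)=t$ then $\mathcal{S}_p$ is a $t$-pencil; (2) if $T\in\mathcal{T}$, then all $k$-spaces containing $T$ belong to $\mathcal{S}_p$; (3) any two elements of $\mathcal{T}$ intersect in at least a $t$-space.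
   Context: Dimensions are projective; "intersect in at least a $t$-space" means the intersection has dimension at least $t$. Maximal means no further $k$-space can be added keeping the property. A $t$-pencil is the set of all $k$-spaces through a fixed $t$-space. *)

theory Defs
  imports Complex_Main "HOL-Library.Function_Algebras"
begin

text \<open>PG(n,q) is modelled as the lattice of linear subspaces of the vector space
  of functions 'm => 'a, where 'a is a finite field (q = CARD('a)) and
  'm is a finite index type with CARD('m) = n + 1.  Projective dimension
  of a linear subspace = vector space dimension - 1.\<close>

definition pscale :: "'a::field \<Rightarrow> ('m \<Rightarrow> 'a) \<Rightarrow> ('m \<Rightarrow> 'a)" where
  "pscale c v = (\<lambda>i. c * v i)"

definition psubspace :: "('m \<Rightarrow> 'a::field) set \<Rightarrow> bool" where
  "psubspace U \<longleftrightarrow> module.subspace (pscale :: 'a \<Rightarrow> _) U"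

definition pdim :: "('m \<Rightarrow> 'a::field) set \<Rightarrow> int" where
  "pdim U = int (vector_space.dim (pscale :: 'a \<Rightarrow> _) U) - 1"

definition kspace :: "nat \<Rightarrow> ('m \<Rightarrow> 'a::field) set \<Rightarrow> bool" where
  "kspace k U \<longleftrightarrow> psubspace U \<and> pdim U = int k"

definition t_intersecting :: "nat \<Rightarrow> nat \<Rightarrow> ('m \<Rightarrow> 'a::field) set set \<Rightarrow> bool" where
  "t_intersecting k t S \<longleftrightarrow> (\<forall>A\<in>S. kspace k A) \<and>
     (\<forall>A\<in>S. \<forall>B\<in>S. pdim (A \<inter> B) \<ge> int t)"

definition maximal_t_intersecting :: "nat \<Rightarrow> nat \<Rightarrow> ('m \<Rightarrow> 'a::field) set set \<Rightarrow> bool" where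
  "maximal_t_intersecting k t S \<longleftrightarrow> t_intersecting k t S \<and>
     (\<forall>U. kspace k U \<and> U \<notin> S \<longrightarrow> \<not> t_intersecting k t (insert U S))"

definition t_blocking :: "nat \<Rightarrow> ('m \<Rightarrow> 'a::field) set set \<Rightarrow> ('m \<Rightarrow> 'a) set \<Rightarrow> bool" where
  "t_blocking t S T \<longleftrightarrow> psubspace T \<and> (\<forall>\<alpha>\<in>S. pdim (T \<inter> \<alpha>) \<ge> int t)"

definition psi :: "nat \<Rightarrow> ('m \<Rightarrow> 'a::field) set set \<Rightarrow> int" where
  "psi t S = Min {pdim T | T. t_blocking t S T}"

definition psiT :: "nat \<Rightarrow> ('m \<Rightarrow> 'a::field) set set \<Rightarrow> ('m \<Rightarrow> 'a) set set" where
  "psiT t S = {T. t_blocking t S T \<and> pdim T = psi t S}"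

definition t_pencil :: "nat \<Rightarrow> nat \<Rightarrow> ('m \<Rightarrow> 'a::field) set set \<Rightarrow> bool" where
  "t_pencil k t S \<longleftrightarrow> (\<exists>P. kspace t P \<and> S = {U. kspace k U \<and> P \<subseteq> U})"

end

theory Submission
  imports Defs
begin

definition pe :: "'m \<Rightarrow> 'm \<Rightarrow> 'a::field" where "pe i = (\<lambda>j. if j = i then 1 else 0)"

lemma pvs: "vector_space (pscale :: 'a::field \<Rightarrow> ('m \<Rightarrow> 'a) \<Rightarrow> _)"
  by unfold_locales (auto simp: pscale_def fun_eq_iff algebra_simps)

lemma sum_fun_apply': "(sum f A :: 'm \<Rightarrow> 'a::comm_monoid_add) x = sum (\<lambda>a. f a x) A"
  by (induction A rule: infinite_finite_induct) auto

lemma pscale_pe: "pscale c (pe j) i = (if i = j then c else (0::'a::field))"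
  by (simp add: pscale_def pe_def)

lemma pfdvs: "finite_dimensional_vector_space (pscale :: 'a::field \<Rightarrow> ('m::finite \<Rightarrow> 'a) \<Rightarrow> _) (range pe)"
proof -
  interpret v: vector_space "pscale :: 'a::field \<Rightarrow> ('m::finite \<Rightarrow> 'a) \<Rightarrow> _" by (rule pvs)
  show ?thesis
  proof
    show "finite (range (pe :: 'm \<Rightarrow> 'm \<Rightarrow> 'a))" by simp
    show "v.independent (range (pe :: 'm \<Rightarrow> 'm \<Rightarrow> 'a))"
      unfolding v.dependent_finite[OF finite_imageI[OF finite_UNIV]]
    proof (intro notI, elim exE conjE bexE)
      fix u :: "('m \<Rightarrow> 'a) \<Rightarrow> 'a" and v
      assume h: "(\<Sum>v\<in>range pe. pscale (u v) v) = 0" "v \<in> range (pe :: 'm \<Rightarrow> 'm \<Rightarrow> 'a)" "u v \<noteq> 0"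
      then obtain i where vi: "v = pe i" by auto
      have inj: "inj (pe :: 'm \<Rightarrow> 'm \<Rightarrow> 'a)" by (auto simp: inj_def pe_def fun_eq_iff split: if_splits)
      have "0 = (\<Sum>v\<in>range pe. pscale (u v) v) i" using h by simp
      also have "\<dots> = (\<Sum>j\<in>UNIV. pscale (u (pe j)) (pe j)) i"
        by (simp add: sum.reindex[OF inj])
      also have "\<dots> = (\<Sum>j\<in>UNIV. if i = j then u (pe j) else 0)"
        by (simp add: sum_fun_apply' pscale_pe)
      also have "\<dots> = u (pe i)" by simp
      finally show False using h vi by simp
    qed
    show "v.span (range (pe :: 'm \<Rightarrow> 'm \<Rightarrow> 'a)) = UNIV"
    proof (intro set_eqI iffI)
      fix f :: "'m \<Rightarrow> 'a"
      have "f = (\<Sum>j\<in>UNIV. pscale (f j) (pe j))"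
        by (simp add: fun_eq_iff sum_fun_apply' pscale_pe)
      moreover have "(\<Sum>j\<in>UNIV. pscale (f j) (pe j)) \<in> v.span (range pe)"
        by (intro v.span_sum v.span_scale v.span_base) auto
      ultimately show "f \<in> v.span (range pe)" by simp
    qed auto
  qed
qed

interpretation pv: finite_dimensional_vector_space "pscale :: 'a::field \<Rightarrow> ('m::finite \<Rightarrow> 'a) \<Rightarrow> _" "range pe"
  by (rule pfdvs)

lemma card_pe: "card (range (pe :: 'm::finite \<Rightarrow> 'm \<Rightarrow> 'a::field)) = (card (UNIV :: 'm set))"
proof -
  have "inj (pe :: 'm \<Rightarrow> 'm \<Rightarrow> 'a)" by (auto simp: inj_def pe_def fun_eq_iff split: if_splits)
  then show ?thesis by (simp add: card_image)
qed

lemma dimUNIV: "pv.dim (UNIV :: ('m::finite \<Rightarrow> 'a::field) set) = (card (UNIV :: 'm set))"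
  by (simp add: card_pe)

lemma span_span_Un: "pv.span (pv.span A \<union> B) = pv.span (A \<union> (B :: ('m::finite \<Rightarrow> 'a::field) set))"
  by (simp only: pv.span_Un pv.span_span)

lemma ext_lemma:
  fixes W :: "('m::finite \<Rightarrow> 'a::field) set"
  assumes W: "pv.subspace W"
  shows "pv.subspace V \<Longrightarrow> pv.dim V \<le> K \<Longrightarrow> K \<le> (card (UNIV :: 'm set)) \<Longrightarrow>
    \<exists>U. pv.subspace U \<and> V \<subseteq> U \<and> pv.dim U = K \<and>
      min (card (UNIV :: 'm set)) (pv.dim (pv.span (V \<union> W)) + (K - pv.dim V)) \<le> pv.dim (pv.span (U \<union> W))"
proof (induction "K - pv.dim V" arbitrary: V)
  case 0
  then show ?case by (intro exI[of _ V]) auto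
next
  case (Suc m)
  have lt: "pv.dim V < K" using Suc by linarith
  have "\<exists>v. v \<notin> V \<and> min (card (UNIV :: 'm set)) (pv.dim (pv.span (V \<union> W)) + (K - pv.dim V))
     \<le> min (card (UNIV :: 'm set)) (pv.dim (pv.span (pv.span (insert v V) \<union> W)) + (K - pv.dim (pv.span (insert v V))))"
  proof (cases "pv.span (V \<union> W) = UNIV")
    case True
    have "V \<noteq> UNIV"
    proof
      assume "V = UNIV"
      then have "pv.dim V = card (UNIV :: 'm set)" using dimUNIV by simp
      then show False using lt Suc.prems(3) by simp
    qed
    then obtain v where v: "v \<notin> V" by auto
    have "V \<union> W \<subseteq> pv.span (insert v V) \<union> W"
      using pv.span_superset[of "insert v V"] by blast
    then have "pv.span (V \<union> W) \<subseteq> pv.span (pv.span (insert v V) \<union> W)"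
      by (rule pv.span_mono)
    then have "pv.span (pv.span (insert v V) \<union> W) = UNIV" using True by auto
    then have "pv.dim (pv.span (pv.span (insert v V) \<union> W)) = (card (UNIV :: 'm set))" using dimUNIV by simp
    then show ?thesis using v by (intro exI[of _ v]) (simp add: min_def)
  next
    case False
    then obtain v where v: "v \<notin> pv.span (V \<union> W)" by auto
    have vV: "v \<notin> pv.span V" using v pv.span_mono[of V "V \<union> W"] by auto
    then have "v \<notin> V" using pv.span_superset by auto
    moreover have e1: "pv.dim (pv.span (insert v V)) = pv.dim V + 1"
      using vV by (simp add: pv.dim_insert)
    moreover have e2: "pv.dim (pv.span (pv.span (insert v V) \<union> W)) = pv.dim (pv.span (V \<union> W)) + 1"
      using v by (simp add: span_span_Un pv.dim_insert)
    moreover have "pv.dim (pv.span (V \<union> W)) + 1 + (K - (pv.dim V + 1)) = pv.dim (pv.span (V \<union> W)) + (K - pv.dim V)"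
      using lt by linarith
    ultimately show ?thesis by (intro exI[of _ v]) simp
  qed
  then obtain v where v: "v \<notin> V" and mn: "min (card (UNIV :: 'm set)) (pv.dim (pv.span (V \<union> W)) + (K - pv.dim V))
     \<le> min (card (UNIV :: 'm set)) (pv.dim (pv.span (pv.span (insert v V) \<union> W)) + (K - pv.dim (pv.span (insert v V))))"
    by blast
  define V' where "V' = pv.span (insert v V)"
  have spV: "pv.span V = V" using Suc.prems(1) pv.span_eq_iff by blast
  have vV: "v \<notin> pv.span V" unfolding spV by (rule v)
  have dV': "pv.dim V' = pv.dim V + 1" unfolding V'_def using vV by (simp add: pv.dim_insert)
  have "\<exists>U. pv.subspace U \<and> V' \<subseteq> U \<and> pv.dim U = K \<and>
      min (card (UNIV :: 'm set)) (pv.dim (pv.span (V' \<union> W)) + (K - pv.dim V')) \<le> pv.dim (pv.span (U \<union> W))"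
  proof (rule Suc.hyps(1))
    show "m = K - pv.dim V'" using Suc.hyps(2) dV' by simp
    show "pv.subspace V'" unfolding V'_def by simp
    show "pv.dim V' \<le> K" using dV' lt by simp
    show "K \<le> card (UNIV :: 'm set)" by (rule Suc.prems(3))
  qed
  then obtain U where U: "pv.subspace U" "V' \<subseteq> U" "pv.dim U = K"
    "min (card (UNIV :: 'm set)) (pv.dim (pv.span (V' \<union> W)) + (K - pv.dim V')) \<le> pv.dim (pv.span (U \<union> W))" by blast
  have "V \<subseteq> V'" unfolding V'_def using pv.span_superset[of "insert v V"] by blast
  moreover have "min (card (UNIV :: 'm set)) (pv.dim (pv.span (V \<union> W)) + (K - pv.dim V)) \<le> pv.dim (pv.span (U \<union> W))"
    using mn U(4) unfolding V'_def by linarith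
  ultimately show ?case using U by blast
qed

lemma psub_iff: "psubspace U \<longleftrightarrow> pv.subspace (U :: ('m::finite \<Rightarrow> 'a::field) set)"
  by (simp add: psubspace_def)

lemma pdim_eq: "pdim U = int (pv.dim (U :: ('m::finite \<Rightarrow> 'a::field) set)) - 1"
  by (simp add: pdim_def)

lemma pdim_mono: "A \<subseteq> B \<Longrightarrow> pdim A \<le> pdim (B :: ('m::finite \<Rightarrow> 'a::field) set)"
  using pv.dim_subset[of A B] by (simp add: pdim_eq)

lemma pdim_le: "pdim (A :: ('m::finite \<Rightarrow> 'a::field) set) \<le> int (card (UNIV :: 'm set))"
proof -
  have "pv.dim A \<le> card (UNIV :: 'm set)" using pv.dim_subset_UNIV[of A] by (simp add: pv.dimension_def card_pe)
  then show ?thesis by (simp add: pdim_eq)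
qed

lemma pdim_ge: "pdim (A :: ('m::finite \<Rightarrow> 'a::field) set) \<ge> -1"
  by (simp add: pdim_eq)

lemma grass:
  fixes A B :: "('m::finite \<Rightarrow> 'a::field) set"
  assumes A: "pv.subspace A" and B: "pv.subspace B"
  shows "pv.dim (pv.span (A \<union> B)) + pv.dim (A \<inter> B) = pv.dim A + pv.dim B"
proof -
  have SA: "pv.span A = A" using A pv.span_eq_iff by blast
  have SB: "pv.span B = B" using B pv.span_eq_iff by blast
  have "pv.span (A \<union> B) = {x + y |x y. x \<in> pv.span A \<and> y \<in> pv.span B}" by (rule pv.span_Un)
  also have "\<dots> = {x + y |x y. x \<in> A \<and> y \<in> B}" unfolding SA SB ..
  finally have "pv.span (A \<union> B) = {x + y |x y. x \<in> A \<and> y \<in> B}" .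
  then show ?thesis using pv.dim_sums_Int[OF A B] by simp
qed

lemma arith_aux: "\<lbrakk>(y::nat) + i = (k+1) + (k+1); s + d = a + a; d \<le> t; a \<le> k+1; 2*k+2 \<le> N + t;
  N \<le> x \<or> s + (k+1-a) \<le> x; N \<le> y \<or> x + (k+1-a) \<le> y\<rbrakk> \<Longrightarrow> i \<le> t"
  by (elim disjE; linarith)

lemma blocking_in:
  fixes S :: "('m::finite \<Rightarrow> 'a::field) set set"
  assumes max: "maximal_t_intersecting k t S" and T: "t_blocking t S T"
    and U: "kspace k U" and TU: "T \<subseteq> U" and tk: "t \<le> k"
  shows "U \<in> S"
proof (rule ccontr)
  assume "U \<notin> S"
  then have "\<not> t_intersecting k t (insert U S)" using max U unfolding maximal_t_intersecting_def by blast
  moreover have "t_intersecting k t (insert U S)"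
  proof -
    have S: "t_intersecting k t S" using max by (simp add: maximal_t_intersecting_def)
    have a: "\<forall>A\<in>S. pdim (U \<inter> A) \<ge> int t"
    proof
      fix A assume "A \<in> S"
      then have "pdim (T \<inter> A) \<ge> int t" using T by (simp add: t_blocking_def)
      moreover have "pdim (T \<inter> A) \<le> pdim (U \<inter> A)" using TU by (intro pdim_mono) auto
      ultimately show "pdim (U \<inter> A) \<ge> int t" by linarith
    qed
    have b: "pdim (U \<inter> U) \<ge> int t" using U tk by (simp add: kspace_def)
    show ?thesis using S a b U unfolding t_intersecting_def by (auto simp: Int_commute)
  qed
  ultimately show False by blast
qed

theorem mainTheorem8:
  fixes S :: "('m::finite \<Rightarrow> 'a::field) set set" and k t :: nat
  assumes fin: "finite (UNIV :: 'a set)"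
    and kt: "k > t + 1"
    and nk: "int (card (UNIV :: 'm set)) - 1 > 2 * int k - int t"
    and max: "maximal_t_intersecting k t S"
  shows "(int t \<le> psi t S \<and> psi t S \<le> int k \<and> (psi t S = int t \<longrightarrow> t_pencil k t S))
    \<and> (\<forall>T\<in>psiT t S. \<forall>U. kspace k U \<and> T \<subseteq> U \<longrightarrow> U \<in> S)
    \<and> (\<forall>T1\<in>psiT t S. \<forall>T2\<in>psiT t S. pdim (T1 \<inter> T2) \<ge> int t)"
proof -
  define N where "N = card (UNIV :: 'm set)"
  have SI: "t_intersecting k t S" using max by (simp add: maximal_t_intersecting_def)
  have tk: "t \<le> k" using kt by simp
  have "int k + 1 \<le> int N" using nk tk unfolding N_def by linarith
  then have kN: "k + 1 \<le> N" by simp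
  have "k + 1 \<le> pv.dim (UNIV :: ('m \<Rightarrow> 'a) set)" using kN unfolding N_def by (simp add: card_pe)
  then obtain U0 :: "('m \<Rightarrow> 'a) set" where U0: "pv.subspace U0" "pv.dim U0 = k + 1"
    using pv.choose_subspace_of_subspace[of "k+1" UNIV] by blast
  have kU0: "kspace k U0" using U0 by (simp add: kspace_def psub_iff pdim_eq)
  have Sne: "S \<noteq> {}"
  proof
    assume "S = {}"
    then have "\<not> t_intersecting k t {U0}" using max kU0 unfolding maximal_t_intersecting_def by blast
    moreover have "t_intersecting k t {U0}" using kU0 kt by (auto simp: t_intersecting_def kspace_def)
    ultimately show False by blast
  qed
  then obtain A0 where A0: "A0 \<in> S" by blast
  define B where "B = {pdim T | T. t_blocking t S T}"
  have finB: "finite B"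
  proof (rule finite_subset)
    show "B \<subseteq> {-1 .. int N}"
    proof
      fix x assume "x \<in> B"
      then obtain T :: "('m \<Rightarrow> 'a) set" where "x = pdim T" unfolding B_def by blast
      then show "x \<in> {-1 .. int N}" using pdim_le[of T] pdim_ge[of T] unfolding N_def by simp
    qed
  qed simp
  have blA0: "t_blocking t S A0" using SI A0 by (auto simp: t_intersecting_def t_blocking_def kspace_def)
  have kA0: "pdim A0 = int k" using SI A0 by (auto simp: t_intersecting_def kspace_def)
  have BA0: "int k \<in> B" unfolding B_def using blA0 kA0[symmetric] by blast
  have psi_le: "psi t S \<le> int k" unfolding psi_def B_def[symmetric] using finB BA0 by simp
  have "psi t S \<in> B" unfolding psi_def B_def[symmetric] using finB BA0 by (intro Min_in) auto
  then obtain T0 where T0: "t_blocking t S T0" "pdim T0 = psi t S" unfolding B_def by auto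
  have blge: "pdim T \<ge> int t" if "t_blocking t S T" for T
  proof -
    have "pdim (T \<inter> A0) \<ge> int t" using that A0 by (simp add: t_blocking_def)
    moreover have "pdim (T \<inter> A0) \<le> pdim T" by (intro pdim_mono) auto
    ultimately show ?thesis by linarith
  qed
  have psi_ge: "int t \<le> psi t S" using blge[OF T0(1)] T0(2) by simp
  have pencil: "t_pencil k t S" if "psi t S = int t"
  proof -
    have sub0: "pv.subspace T0" using T0 by (simp add: t_blocking_def psub_iff)
    have T0A: "T0 \<subseteq> A" if "A \<in> S" for A
    proof -
      have sA: "pv.subspace A" using SI that by (simp add: t_intersecting_def kspace_def psub_iff)
      have "pdim (T0 \<inter> A) \<ge> int t" using T0 that by (simp add: t_blocking_def)
      then have "int t \<le> int (pv.dim (T0 \<inter> A)) - 1" unfolding pdim_eq .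
      moreover have "int (pv.dim T0) - 1 = int t" using T0(2) \<open>psi t S = int t\<close> unfolding pdim_eq by simp
      ultimately have "int (pv.dim T0) \<le> int (pv.dim (T0 \<inter> A))" by linarith
      then have "pv.dim T0 \<le> pv.dim (T0 \<inter> A)" by (simp only: of_nat_le_iff)
      then have "T0 \<inter> A = T0"
        by (rule pv.subspace_dim_equal[OF pv.subspace_inter[OF sub0 sA] sub0 Int_lower1])
      then show ?thesis by blast
    qed
    have "S = {U. kspace k U \<and> T0 \<subseteq> U}"
    proof (intro set_eqI iffI)
      fix U assume "U \<in> S"
      then show "U \<in> {U. kspace k U \<and> T0 \<subseteq> U}" using SI T0A[of U] by (simp add: t_intersecting_def)
    next
      fix U assume "U \<in> {U. kspace k U \<and> T0 \<subseteq> U}"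
      then show "U \<in> S" using blocking_in[OF max T0(1) _ _ tk] by simp
    qed
    moreover have "kspace t T0" using sub0 T0(2) \<open>psi t S = int t\<close> by (simp add: kspace_def psub_iff)
    ultimately show ?thesis unfolding t_pencil_def by blast
  qed
  have part2: "\<forall>T\<in>psiT t S. \<forall>U. kspace k U \<and> T \<subseteq> U \<longrightarrow> U \<in> S"
  proof (intro ballI allI impI)
    fix T U assume "T \<in> psiT t S" "kspace k U \<and> T \<subseteq> U"
    then show "U \<in> S" using blocking_in[OF max _ _ _ tk, of T U] by (simp add: psiT_def)
  qed
  have part3: "pdim (T1 \<inter> T2) \<ge> int t" if T1: "T1 \<in> psiT t S" and T2: "T2 \<in> psiT t S" for T1 T2
  proof (rule ccontr)
    assume "\<not> pdim (T1 \<inter> T2) \<ge> int t"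
    then have d: "pv.dim (T1 \<inter> T2) \<le> t" by (simp add: pdim_eq)
    have s1: "pv.subspace T1" and s2: "pv.subspace T2" using T1 T2 by (auto simp: psiT_def t_blocking_def psub_iff)
    have "pdim T1 = psi t S" "pdim T2 = psi t S" using T1 T2 by (auto simp: psiT_def)
    then have a1: "pv.dim T1 \<le> k + 1" and a12: "pv.dim T1 = pv.dim T2" using psi_le by (auto simp: pdim_eq)
    have a2: "pv.dim T2 \<le> k + 1" using a1 a12 by simp
    have kN': "k + 1 \<le> card (UNIV::'m set)" using kN N_def by simp
    have g12: "pv.dim (pv.span (T1 \<union> T2)) + pv.dim (T1 \<inter> T2) = pv.dim T1 + pv.dim T2"
      using grass[OF s1 s2] .
    obtain U1 where U1: "pv.subspace U1" "T1 \<subseteq> U1" "pv.dim U1 = k + 1"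
      "min N (pv.dim (pv.span (T1 \<union> T2)) + (k + 1 - pv.dim T1)) \<le> pv.dim (pv.span (U1 \<union> T2))"
      using ext_lemma[OF s2 s1 a1 kN'] unfolding N_def by blast
    obtain U2 where U2: "pv.subspace U2" "T2 \<subseteq> U2" "pv.dim U2 = k + 1"
      "min N (pv.dim (pv.span (T2 \<union> U1)) + (k + 1 - pv.dim T2)) \<le> pv.dim (pv.span (U2 \<union> U1))"
      using ext_lemma[OF U1(1) s2 a2 kN'] unfolding N_def by blast
    have g21: "pv.dim (pv.span (U2 \<union> U1)) + pv.dim (U2 \<inter> U1) = pv.dim U2 + pv.dim U1"
      using grass[OF U2(1) U1(1)] .
    have "2 * int k + 2 \<le> int N + int t" using nk unfolding N_def by linarith
    then have "int (2 * k + 2) \<le> int (N + t)" by simp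
    then have N2: "2 * k + 2 \<le> N + t" by (simp only: of_nat_le_iff)
    have h1: "N \<le> pv.dim (pv.span (U1 \<union> T2)) \<or> pv.dim (pv.span (T1 \<union> T2)) + (k + 1 - pv.dim T1) \<le> pv.dim (pv.span (U1 \<union> T2))"
      using U1(4) by (simp only: min_le_iff_disj)
    have h2: "N \<le> pv.dim (pv.span (U2 \<union> U1)) \<or> pv.dim (pv.span (U1 \<union> T2)) + (k + 1 - pv.dim T2) \<le> pv.dim (pv.span (U2 \<union> U1))"
      using U2(4) unfolding Un_commute[of T2 U1] by (simp only: min_le_iff_disj)
    have dle: "pv.dim (U2 \<inter> U1) \<le> t"
      by (rule arith_aux[OF g21[unfolded U1(3) U2(3)] g12[unfolded a12[symmetric]] d a1 N2 h1[unfolded a12[symmetric]] h2[unfolded a12[symmetric]]])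
    have kU1: "kspace k U1" using U1(1,3) by (simp add: kspace_def psub_iff pdim_eq)
    have kU2: "kspace k U2" using U2(1,3) by (simp add: kspace_def psub_iff pdim_eq)
    have b1: "t_blocking t S T1" using T1 by (simp add: psiT_def)
    have b2: "t_blocking t S T2" using T2 by (simp add: psiT_def)
    have U1S: "U1 \<in> S" by (rule blocking_in[OF max b1 kU1 U1(2) tk])
    have U2S: "U2 \<in> S" by (rule blocking_in[OF max b2 kU2 U2(2) tk])
    have "\<forall>A\<in>S. \<forall>B\<in>S. int t \<le> pdim (A \<inter> B)" using SI by (simp add: t_intersecting_def)
    then have ge: "int t \<le> pdim (U2 \<inter> U1)" using U1S U2S by simp
    have "int t \<le> int (pv.dim (U2 \<inter> U1)) - 1" using ge unfolding pdim_eq .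
    then have "int (t + 1) \<le> int (pv.dim (U2 \<inter> U1))" by simp
    then have "t + 1 \<le> pv.dim (U2 \<inter> U1)" by (simp only: of_nat_le_iff)
    then show False using dle by simp
  qed
  have p1: "int t \<le> psi t S \<and> psi t S \<le> int k \<and> (psi t S = int t \<longrightarrow> t_pencil k t S)"
    using psi_le psi_ge pencil by simp
  have p3: "\<forall>T1\<in>psiT t S. \<forall>T2\<in>psiT t S. pdim (T1 \<inter> T2) \<ge> int t" using part3 by simp
  show ?thesis using p1 part2 p3 by (rule conjI[OF _ conjI])
qed

end
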